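(* For all $n,k\in\mathbb N$ and all $t\in(0,1)$, the matrix $A_{n,k,t}$ is a GKK matrix, i.e. a weakly sign-symmetric $P$-matrix.
   Context: For $x\in\mathbb R$, $x_+=\max\{x,0\}$. For $k\in\mathbb{N}$ and $t\in(0,1)$, $A_{\infty,k,t}=(A(i,j))_{i,j\ge1}$ is the infinite Toeplitz Hessenberg matrix with $A(i,j)=a_{j-i}$ for $j\ge i$, $A(i+1,i)=1$, and $A(i,j)=0$ for $i\ge j+2$, where $(a_0,a_1,\ldots)$ is the unique sequence for which the leading principal minors satisfy $\det A(\{1,\dots,n\})=t^{(n-k-1)_+}$ for all $n\in\mathbb N$. $A_{n,k,t}$ is the leading principal $n\times n$ submatrix of $A_{\infty,k,t}$. For $A\in\mathbb C^{n\times n}$ and $\alpha,\beta\subseteq\{1,\dots,n\}$ with $\#\alpha=\#\beta$, $A[\alpha,\beta]$ is the determinant of the submatrix with rows $\alpha$ and columns $\beta$, $A[\alpha]=A[\alpha,\alpha]$, $A[\emptyset]=1$. $A$ is a $P$-matrix if $A[\alpha]>0$ for all $\alpha\subseteq\{1,\dots,n\}$. $A$ is weakly sign-symmetric if $A[\alpha,\beta]A[\beta,\alpha]\ge0$ for all $\alpha,\beta$ with $\#\alpha=\#\beta=\#(\alpha\cup\beta)-1$. *)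

theory Defs
  imports "Jordan_Normal_Form.Determinant" "Jordan_Normal_Form.DL_Submatrix"
begin

text \<open>Matrices are Jordan_Normal_Form matrices with 0-based indices: row/column i
  of the paper corresponds to index i - 1 here.\<close>

definition toeplitz_hess :: "(nat \<Rightarrow> real) \<Rightarrow> nat \<Rightarrow> real mat" where
  "toeplitz_hess a n = mat n n (\<lambda>(i, j).
     if i \<le> j then a (j - i) else if i = Suc j then 1 else 0)"

text \<open>The unique sequence whose leading principal minors are t^((n-k-1)_+)
  (natural-number subtraction truncates at 0, giving the positive part).\<close>
definition seq_kt :: "nat \<Rightarrow> real \<Rightarrow> nat \<Rightarrow> real" where
  "seq_kt k t = (THE a. \<forall>n\<ge>1. det (toeplitz_hess a n) = t ^ (n - k - 1))"

definition A_nkt :: "nat \<Rightarrow> nat \<Rightarrow> real \<Rightarrow> real mat" where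
  "A_nkt n k t = toeplitz_hess (seq_kt k t) n"

text \<open>Minor A[alpha, beta]; the empty minor is det of a 0 x 0 matrix, i.e. 1.\<close>
definition minor :: "real mat \<Rightarrow> nat set \<Rightarrow> nat set \<Rightarrow> real" where
  "minor A \<alpha> \<beta> = det (submatrix A \<alpha> \<beta>)"

definition P_matrix :: "real mat \<Rightarrow> bool" where
  "P_matrix A \<longleftrightarrow> A \<in> carrier_mat (dim_row A) (dim_row A) \<and>
     (\<forall>\<alpha>. \<alpha> \<subseteq> {..<dim_row A} \<longrightarrow> minor A \<alpha> \<alpha> > 0)"

definition weakly_sign_symmetric :: "real mat \<Rightarrow> bool" where
  "weakly_sign_symmetric A \<longleftrightarrow> A \<in> carrier_mat (dim_row A) (dim_row A) \<and>
     (\<forall>\<alpha> \<beta>. \<alpha> \<subseteq> {..<dim_row A} \<longrightarrow> \<beta> \<subseteq> {..<dim_row A} \<longrightarrow>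
        card \<alpha> = card \<beta> \<longrightarrow> card (\<alpha> \<union> \<beta>) = card \<alpha> + 1 \<longrightarrow>
        minor A \<alpha> \<beta> * minor A \<beta> \<alpha> \<ge> 0)"

definition GKK_matrix :: "real mat \<Rightarrow> bool" where
  "GKK_matrix A \<longleftrightarrow> weakly_sign_symmetric A \<and> P_matrix A"

end

theory Submission
  imports Defs
begin

declare upt_Suc[simp del]

definition Fh :: "(nat \<Rightarrow> real) \<Rightarrow> nat \<Rightarrow> nat \<Rightarrow> real" where
  "Fh a i j = (if i \<le> j then a (j - i) else if i = Suc j then 1 else 0)"

definition mL :: "(nat \<Rightarrow> nat \<Rightarrow> real) \<Rightarrow> nat list \<Rightarrow> nat list \<Rightarrow> real" where
  "mL f xs ys = det (mat (length xs) (length xs) (\<lambda>(i,j). f (xs!i) (ys!j)))"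

definition dd :: "(nat \<Rightarrow> real) \<Rightarrow> nat \<Rightarrow> real" where
  "dd a n = det (toeplitz_hess a n)"

lemma toeplitz_hess_Fh: "toeplitz_hess a n = mat n n (\<lambda>(i,j). Fh a i j)"
  unfolding toeplitz_hess_def Fh_def by (rule eq_matI) auto

lemma Fh_zero: "Suc y < x \<Longrightarrow> Fh a x y = 0"
  unfolding Fh_def by auto

lemma Fh_shift: "Fh a (i + s) (j + s) = Fh a i j"
  unfolding Fh_def by auto

lemma dd_mL: "dd a n = mL (Fh a) [0..<n] [0..<n]"
  unfolding dd_def mL_def toeplitz_hess_Fh by (intro arg_cong[where f=det] eq_matI) auto

lemma dd_0: "dd a 0 = 1"
  unfolding dd_def toeplitz_hess_def by (simp add: det_dim_zero)

lemma mL_Nil: "mL f [] [] = 1"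
  unfolding mL_def by (simp add: det_dim_zero)

lemma mL_block:
  assumes l1: "length xs1 = length ys1" and l2: "length xs2 = length ys2"
    and z: "\<And>x y. x \<in> set xs2 \<Longrightarrow> y \<in> set ys1 \<Longrightarrow> f x y = 0"
  shows "mL f (xs1@xs2) (ys1@ys2) = mL f xs1 ys1 * mL f xs2 ys2"
proof -
  let ?n1 = "length xs1" let ?n2 = "length xs2"
  let ?A1 = "mat ?n1 ?n1 (\<lambda>(i,j). f (xs1!i) (ys1!j))"
  let ?A2 = "mat ?n1 ?n2 (\<lambda>(i,j). f (xs1!i) (ys2!j))"
  let ?A4 = "mat ?n2 ?n2 (\<lambda>(i,j). f (xs2!i) (ys2!j))"
  have eq: "mat (length (xs1@xs2)) (length (xs1@xs2)) (\<lambda>(i,j). f ((xs1@xs2)!i) ((ys1@ys2)!j))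
     = four_block_mat ?A1 ?A2 (0\<^sub>m ?n2 ?n1) ?A4"
  proof (rule eq_matI)
    fix i j assume i: "i < dim_row (four_block_mat ?A1 ?A2 (0\<^sub>m ?n2 ?n1) ?A4)"
      and j: "j < dim_col (four_block_mat ?A1 ?A2 (0\<^sub>m ?n2 ?n1) ?A4)"
    have zz: "\<not> i < ?n1 \<Longrightarrow> j < ?n1 \<Longrightarrow> f (xs2 ! (i - ?n1)) (ys1 ! j) = 0"
      using i j l1 by (intro z) auto
    show "mat (length (xs1@xs2)) (length (xs1@xs2)) (\<lambda>(i,j). f ((xs1@xs2)!i) ((ys1@ys2)!j)) $$ (i,j)
       = four_block_mat ?A1 ?A2 (0\<^sub>m ?n2 ?n1) ?A4 $$ (i,j)"
      using i j l1 l2 zz by (auto simp: nth_append)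
  qed auto
  show ?thesis unfolding mL_def eq
    by (rule det_four_block_mat_lower_left_zero) auto
qed

lemma mL_zero:
  assumes l: "length xs1 + length xs2 = length ys1 + length ys2"
    and gt: "length xs2 + length ys1 > length xs1 + length xs2"
    and z: "\<And>x y. x \<in> set xs2 \<Longrightarrow> y \<in> set ys1 \<Longrightarrow> f x y = 0"
  shows "mL f (xs1@xs2) (ys1@ys2) = 0"
proof -
  let ?n = "length (xs1@xs2)" let ?n1 = "length xs1" let ?m1 = "length ys1"
  let ?M = "mat ?n ?n (\<lambda>(i,j). f ((xs1@xs2)!i) ((ys1@ys2)!j))"
  have "det ?M = (\<Sum>p | p permutes {0..<?n}. of_int (sign p) * (\<Prod>i = 0..<?n. ?M $$ (i, p i)))"
    by (rule det_def') auto
  also have "\<dots> = 0"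
  proof (rule sum.neutral, intro ballI)
    fix p assume "p \<in> {p. p permutes {0..<?n}}"
    hence p: "p permutes {0..<?n}" by auto
    have "\<exists>i\<in>{?n1..<?n}. p i < ?m1"
    proof (rule ccontr)
      assume "\<not> ?thesis"
      hence sub: "p ` {?n1..<?n} \<subseteq> {?m1..<?n}"
      proof (intro image_subsetI)
        fix x assume x: "x \<in> {?n1..<?n}" and nn: "\<not> (\<exists>i\<in>{?n1..<?n}. p i < ?m1)"
        have "p x \<in> {0..<?n}" using x permutes_in_image[OF p] by auto
        moreover have "\<not> p x < ?m1" using nn x by blast
        ultimately show "p x \<in> {?m1..<?n}" by auto
      qed
      have "inj_on p {?n1..<?n}" using permutes_inj_on[OF p] .
      from card_inj_on_le[OF this sub] have "card {?n1..<?n} \<le> card {?m1..<?n}" by simp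
      thus False using gt l by simp
    qed
    then obtain i where i: "i \<in> {?n1..<?n}" "p i < ?m1" by blast
    have "?M $$ (i, p i) = 0"
    proof -
      have "i < ?n" using i by auto
      moreover have "p i < ?n" using i l by auto
      ultimately have "?M $$ (i, p i) = f ((xs1@xs2)!i) ((ys1@ys2)!(p i))" by simp
      also have "\<dots> = f (xs2 ! (i - ?n1)) (ys1 ! p i)" using i by (simp add: nth_append)
      also have "\<dots> = 0" using i by (intro z) auto
      finally show ?thesis .
    qed
    hence "(\<Prod>i = 0..<?n. ?M $$ (i, p i)) = 0"
      using i by (intro prod_zero) auto
    thus "of_int (sign p) * (\<Prod>i = 0..<?n. ?M $$ (i, p i)) = 0" by simp
  qed
  finally show ?thesis unfolding mL_def .
qed

lemma mL_shift:
  assumes "length ys = length xs" "\<And>i j. f (i+s) (j+s) = g i j"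
  shows "mL f (map (\<lambda>x. x+s) xs) (map (\<lambda>x. x+s) ys) = mL g xs ys"
  unfolding mL_def using assms by (intro arg_cong[where f=det] eq_matI) auto

lemma mL_Fh_shift:
  assumes "length ys = length xs"
  shows "mL (Fh a) (map (\<lambda>x. x+s) xs) (map (\<lambda>x. x+s) ys) = mL (Fh a) xs ys"
  using assms by (intro mL_shift) (auto simp: Fh_shift)

lemma upt_split: "i \<le> j \<Longrightarrow> j \<le> k \<Longrightarrow> [i..<k] = [i..<j] @ [j..<k]"
  by (metis le_add_diff_inverse upt_add_eq_append)

definition del_list :: "nat \<Rightarrow> nat \<Rightarrow> nat list" where
  "del_list u N = [0..<u] @ [Suc u..<N]"

lemma length_del_list: "u < N \<Longrightarrow> length (del_list u N) = N - 1"
  unfolding del_list_def by auto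

lemma nth_del_list: "u < N \<Longrightarrow> i < N - 1 \<Longrightarrow> del_list u N ! i = (if i < u then i else Suc i)"
  unfolding del_list_def by (auto simp: nth_append)

lemma det_mat_delete_th:
  assumes "r < N" "c < N"
  shows "det (mat_delete (toeplitz_hess a N) r c) = mL (Fh a) (del_list r N) (del_list c N)"
  unfolding mL_def using assms
  by (intro arg_cong[where f=det] eq_matI)
     (auto simp: mat_delete_def toeplitz_hess_Fh length_del_list nth_del_list)

lemma mL_tri: "mL (Fh a) [Suc 0..<Suc j] [0..<j] = 1"
proof -
  let ?M = "mat (length [Suc 0..<Suc j]) (length [Suc 0..<Suc j]) (\<lambda>(i,c). Fh a ([Suc 0..<Suc j]!i) ([0..<j]!c))"
  have M: "?M \<in> carrier_mat j j" by simp
  have ut: "upper_triangular ?M"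
    unfolding upper_triangular_def by (auto simp: Fh_def nth_upt)
  have "det ?M = prod_list (diag_mat ?M)" by (rule det_upper_triangular[OF ut M])
  also have "diag_mat ?M = map (\<lambda>_. 1) [0..<j]"
    unfolding diag_mat_def by (auto simp: Fh_def nth_upt)
  also have "prod_list (map (\<lambda>_. 1::real) [0..<j]) = 1"
    by (induction j) (auto simp: upt_Suc)
  finally show ?thesis unfolding mL_def .
qed

lemma dd_rec: "dd a (Suc n) = (\<Sum>j<Suc n. (-1)^j * a j * dd a (n - j))"
proof -
  let ?A = "toeplitz_hess a (Suc n)"
  have A: "?A \<in> carrier_mat (Suc n) (Suc n)" unfolding toeplitz_hess_def by simp
  have "dd a (Suc n) = (\<Sum>j<Suc n. ?A $$ (0,j) * cofactor ?A 0 j)"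
    unfolding dd_def by (rule laplace_expansion_row[OF A]) simp
  also have "\<dots> = (\<Sum>j<Suc n. (-1)^j * a j * dd a (n - j))"
  proof (rule sum.cong[OF refl])
    fix j assume j: "j \<in> {..<Suc n}"
    have e1: "?A $$ (0,j) = a j" using j unfolding toeplitz_hess_def by auto
    have "[Suc 0..<Suc n] = [Suc 0..<Suc j] @ [Suc j..<Suc n]"
      by (rule upt_split) (use j in auto)
    hence "del_list 0 (Suc n) = [Suc 0..<Suc j] @ [Suc j..<Suc n]"
      unfolding del_list_def by simp
    moreover have "del_list j (Suc n) = [0..<j] @ [Suc j..<Suc n]"
      unfolding del_list_def by simp
    ultimately have "mL (Fh a) (del_list 0 (Suc n)) (del_list j (Suc n))
        = mL (Fh a) [Suc 0..<Suc j] [0..<j] * mL (Fh a) [Suc j..<Suc n] [Suc j..<Suc n]"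
      by (simp only:) (rule mL_block, auto intro: Fh_zero)
    also have "mL (Fh a) [Suc j..<Suc n] [Suc j..<Suc n] = dd a (n - j)"
    proof -
      have "[Suc j..<Suc n] = map (\<lambda>x. x + Suc j) [0..<n - j]"
        using j by (simp only: map_add_upt) simp
      show ?thesis unfolding \<open>[Suc j..<Suc n] = _\<close> dd_mL by (rule mL_Fh_shift) simp
    qed
    finally have "mL (Fh a) (del_list 0 (Suc n)) (del_list j (Suc n)) = dd a (n - j)"
      by (simp add: mL_tri)
    hence "cofactor ?A 0 j = (-1)^j * dd a (n - j)"
      unfolding cofactor_def using j by (simp add: det_mat_delete_th)
    thus "?A $$ (0,j) * cofactor ?A 0 j = (-1)^j * a j * dd a (n - j)"
      using e1 by simp
  qed
  finally show ?thesis .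
qed

lemma dd_rec': "dd a (Suc m) = (\<Sum>j<m. (-1)^j * a j * dd a (m - j)) + (-1)^m * a m"
  unfolding dd_rec by (simp add: dd_0)

definition TT :: "nat \<Rightarrow> real \<Rightarrow> nat \<Rightarrow> real" where "TT k t n = t ^ (n - k - 1)"

fun bl :: "nat \<Rightarrow> real \<Rightarrow> nat \<Rightarrow> real list" where
  "bl k t 0 = []"
| "bl k t (Suc m) = bl k t m @
     [(-1)^m * (TT k t (Suc m) - (\<Sum>j<m. (-1)^j * (bl k t m ! j) * TT k t (m - j)))]"

definition aa :: "nat \<Rightarrow> real \<Rightarrow> nat \<Rightarrow> real" where "aa k t m = bl k t (Suc m) ! m"

lemma length_bl: "length (bl k t m) = m" by (induction m) auto

lemma bl_nth: "j < m \<Longrightarrow> bl k t m ! j = aa k t j"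
proof (induction m)
  case 0 thus ?case by simp
next
  case (Suc m)
  show ?case
  proof (cases "j < m")
    case True thus ?thesis using Suc by (simp add: nth_append length_bl)
  next
    case False hence "j = m" using Suc by simp
    thus ?thesis by (simp add: aa_def)
  qed
qed

lemma aa_eq: "aa k t m = (-1)^m * (TT k t (Suc m) - (\<Sum>j<m. (-1)^j * aa k t j * TT k t (m - j)))"
proof -
  have "aa k t m = (-1)^m * (TT k t (Suc m) - (\<Sum>j<m. (-1)^j * (bl k t m ! j) * TT k t (m - j)))"
    unfolding aa_def by (simp add: nth_append length_bl)
  also have "(\<Sum>j<m. (-1)^j * (bl k t m ! j) * TT k t (m - j)) = (\<Sum>j<m. (-1)^j * aa k t j * TT k t (m - j))"
    by (rule sum.cong) (auto simp: bl_nth)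
  finally show ?thesis .
qed

lemma neg1_sq: "(-1::real)^m * (-1)^m = 1"
  by (simp add: power_mult_distrib[symmetric])

lemma dd_aa: "dd (aa k t) n = TT k t n"
proof (induction n rule: less_induct)
  case (less n)
  show ?case
  proof (cases n)
    case 0 thus ?thesis by (simp add: dd_0 TT_def)
  next
    case (Suc m)
    have "dd (aa k t) (Suc m) = (\<Sum>j<m. (-1)^j * aa k t j * dd (aa k t) (m - j)) + (-1)^m * aa k t m"
      by (rule dd_rec')
    also have "(\<Sum>j<m. (-1)^j * aa k t j * dd (aa k t) (m - j)) = (\<Sum>j<m. (-1)^j * aa k t j * TT k t (m - j))"
      by (rule sum.cong[OF refl]) (use less Suc in auto)
    also have "(-1)^m * aa k t m = TT k t (Suc m) - (\<Sum>j<m. (-1)^j * aa k t j * TT k t (m - j))"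
      by (subst aa_eq) (simp add: mult.assoc[symmetric] neg1_sq)
    finally show ?thesis using Suc by simp
  qed
qed

lemma dd_unique:
  assumes a: "\<And>n. n \<ge> 1 \<Longrightarrow> dd a n = T n" and b: "\<And>n. n \<ge> 1 \<Longrightarrow> dd b n = T n"
  shows "a = b"
proof
  fix m show "a m = b m"
  proof (induction m rule: less_induct)
    case (less m)
    have ddab: "dd a i = dd b i" for i
      using a[of i] b[of i] by (cases i) (auto simp: dd_0)
    have "dd a (Suc m) = dd b (Suc m)" by (rule ddab)
    hence "(\<Sum>j<m. (-1)^j * a j * dd a (m - j)) + (-1)^m * a m
         = (\<Sum>j<m. (-1)^j * b j * dd b (m - j)) + (-1)^m * b m"
      unfolding dd_rec' .
    moreover have "(\<Sum>j<m. (-1)^j * a j * dd a (m - j)) = (\<Sum>j<m. (-1)^j * b j * dd b (m - j))"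
      by (rule sum.cong[OF refl]) (use less ddab in auto)
    ultimately have "(-1)^m * a m = (-1)^m * b m" by simp
    thus ?case by simp
  qed
qed

lemma seq_kt_eq: "seq_kt k t = aa k t"
  unfolding seq_kt_def
proof (rule the_equality)
  show "\<forall>n\<ge>1. det (toeplitz_hess (aa k t) n) = t ^ (n - k - 1)"
    using dd_aa[of k t] unfolding dd_def TT_def by simp
next
  fix b assume "\<forall>n\<ge>1. det (toeplitz_hess b n) = t ^ (n - k - 1)"
  hence "\<And>n. n \<ge> 1 \<Longrightarrow> dd b n = TT k t n" unfolding dd_def TT_def by simp
  moreover have "\<And>n. n \<ge> 1 \<Longrightarrow> dd (aa k t) n = TT k t n" by (rule dd_aa)
  ultimately show "b = aa k t" by (rule dd_unique)
qed

lemma dd_seq: "dd (seq_kt k t) n = t ^ (n - k - 1)"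
  using dd_aa[of k t n] unfolding seq_kt_eq TT_def .

definition EE :: "(nat \<Rightarrow> real) \<Rightarrow> nat \<Rightarrow> real" where "EE a n = (-1)^n * dd a n"

lemma EE_0: "EE a 0 = 1" unfolding EE_def by (simp add: dd_0)

lemma sign_aux: "j \<le> n \<Longrightarrow> (-1::real)^(Suc n) * (-1)^j = - ((-1)^(n-j))"
  by (auto simp: minus_one_power_iff)

lemma EE_rec: "EE a (Suc n) = - (\<Sum>m<Suc n. EE a m * a (n - m))"
proof -
  have "(\<Sum>m<Suc n. EE a m * a (n - m)) = (\<Sum>j<Suc n. EE a (n - j) * a j)"
    using sum.nat_diff_reindex[of "\<lambda>m. EE a m * a (n - m)" "Suc n"] by simp
  also have "\<dots> = - (\<Sum>j<Suc n. (-1)^(Suc n) * ((-1)^j * a j * dd a (n - j)))"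
    unfolding sum_negf[symmetric]
  proof (rule sum.cong[OF refl])
    fix j assume "j \<in> {..<Suc n}"
    hence "(-1::real)^(Suc n) * (-1)^j = - ((-1)^(n-j))" by (intro sign_aux) auto
    hence "(-1)^(Suc n) * ((-1)^j * a j * dd a (n - j)) = - ((-1)^(n-j) * a j * dd a (n-j))"
      by (metis (no_types) mult.assoc mult_minus_left)
    thus "EE a (n - j) * a j = - ((-1)^(Suc n) * ((-1)^j * a j * dd a (n - j)))"
      by (simp add: EE_def) metis
  qed
  finally show ?thesis unfolding EE_def dd_rec sum_distrib_left by simp
qed

lemma rowE:
  assumes j: "j < L"
  shows "(\<Sum>m\<in>{0..<L}. EE a m * Fh a m j) = (if j = L - 1 then - EE a L else 0)"
proof -
  have "(\<Sum>m\<in>{0..<L}. EE a m * Fh a m j) = (\<Sum>m\<in>{0..<Suc j}. EE a m * Fh a m j) + (\<Sum>m\<in>{Suc j..<L}. EE a m * Fh a m j)"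
    using j by (intro sum.atLeastLessThan_concat[symmetric]) auto
  also have "(\<Sum>m\<in>{0..<Suc j}. EE a m * Fh a m j) = (\<Sum>m<Suc j. EE a m * a (j - m))"
    unfolding atLeast0LessThan by (rule sum.cong[OF refl]) (auto simp: Fh_def)
  also have "\<dots> = - EE a (Suc j)" using EE_rec[of a j] by simp
  also have "(\<Sum>m\<in>{Suc j..<L}. EE a m * Fh a m j) = (if Suc j < L then EE a (Suc j) else 0)"
  proof (cases "Suc j < L")
    case True
    have "(\<Sum>m\<in>{Suc j..<L}. EE a m * Fh a m j) = EE a (Suc j) * Fh a (Suc j) j + (\<Sum>m\<in>{Suc (Suc j)..<L}. EE a m * Fh a m j)"
      using True by (rule sum.atLeast_Suc_lessThan)
    also have "(\<Sum>m\<in>{Suc (Suc j)..<L}. EE a m * Fh a m j) = 0"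
      by (rule sum.neutral) (auto simp: Fh_zero)
    finally show ?thesis using True by (simp add: Fh_def)
  qed simp
  finally show ?thesis using j by auto
qed

definition ww :: "(nat \<Rightarrow> real) \<Rightarrow> nat \<Rightarrow> nat \<Rightarrow> real" where
  "ww a i m = (if i < m then EE a (m - Suc i) else 0)"

lemma roww:
  assumes i: "i < L" and j: "j < L"
  shows "(\<Sum>m\<in>{0..<L}. ww a i m * Fh a m j) = (if j = i then 1 else 0) - (if j = L - 1 then EE a (L - 1 - i) else 0)"
proof -
  have "(\<Sum>m\<in>{0..<L}. ww a i m * Fh a m j) = (\<Sum>m\<in>{0..<Suc i}. ww a i m * Fh a m j) + (\<Sum>m\<in>{Suc i..<L}. ww a i m * Fh a m j)"
    using i by (intro sum.atLeastLessThan_concat[symmetric]) auto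
  also have "(\<Sum>m\<in>{0..<Suc i}. ww a i m * Fh a m j) = 0"
    by (rule sum.neutral) (auto simp: ww_def)
  also have "(\<Sum>m\<in>{Suc i..<L}. ww a i m * Fh a m j) = (\<Sum>r\<in>{0..<L - Suc i}. EE a r * Fh a (r + Suc i) j)"
  proof -
    have "{Suc i..<L} = {0 + Suc i..<(L - Suc i) + Suc i}" using i by simp
    hence "(\<Sum>m\<in>{Suc i..<L}. ww a i m * Fh a m j) = (\<Sum>r\<in>{0..<L - Suc i}. ww a i (r + Suc i) * Fh a (r + Suc i) j)"
      by (simp only: sum.shift_bounds_nat_ivl)
    also have "\<dots> = (\<Sum>r\<in>{0..<L - Suc i}. EE a r * Fh a (r + Suc i) j)"
      by (rule sum.cong[OF refl]) (auto simp: ww_def)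
    finally show ?thesis .
  qed
  also have "\<dots> = (if j = i then 1 else 0) - (if j = L - 1 then EE a (L - 1 - i) else 0)"
  proof (cases "j < i")
    case True
    hence "(\<Sum>r\<in>{0..<L - Suc i}. EE a r * Fh a (r + Suc i) j) = 0"
      by (intro sum.neutral) (auto simp: Fh_zero)
    thus ?thesis using True i by auto
  next
    case False
    show ?thesis
    proof (cases "j = i")
      case True
      have "(\<Sum>r\<in>{0..<L - Suc i}. EE a r * Fh a (r + Suc i) j) = (\<Sum>r\<in>{0..<L - Suc i}. if r = 0 then 1 else 0)"
        by (rule sum.cong[OF refl]) (auto simp: Fh_def True EE_0)
      also have "\<dots> = (if 0 < L - Suc i then 1 else 0)"
        by (simp add: sum.delta')
      finally show ?thesis using True i EE_0 by auto
    next
      case False2: False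
      hence ji: "i < j" using False by simp
      have "(\<Sum>r\<in>{0..<L - Suc i}. EE a r * Fh a (r + Suc i) j) = (\<Sum>r\<in>{0..<L - Suc i}. EE a r * Fh a r (j - Suc i))"
      proof (rule sum.cong[OF refl])
        fix r
        have "Fh a (r + Suc i) j = Fh a (r + Suc i) ((j - Suc i) + Suc i)" using ji by simp
        also have "\<dots> = Fh a r (j - Suc i)" by (rule Fh_shift)
        finally show "EE a r * Fh a (r + Suc i) j = EE a r * Fh a r (j - Suc i)" by simp
      qed
      also have "\<dots> = (if j - Suc i = L - Suc i - 1 then - EE a (L - Suc i) else 0)"
        by (rule rowE) (use ji j in auto)
      finally show ?thesis using ji j False2 by auto
    qed
  qed
  finally show ?thesis by simp
qed

definition XX :: "(nat \<Rightarrow> real) \<Rightarrow> nat \<Rightarrow> nat \<Rightarrow> nat \<Rightarrow> real" where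
  "XX a L i m = (-1)^(L-1) * EE a (L - 1 - i) * EE a m + dd a L * ww a i m"

lemma XA:
  assumes i: "i < L" and j: "j < L"
  shows "(\<Sum>m\<in>{0..<L}. XX a L i m * Fh a m j) = (if i = j then dd a L else 0)"
proof -
  have "(\<Sum>m\<in>{0..<L}. XX a L i m * Fh a m j)
     = (-1)^(L-1) * EE a (L - 1 - i) * (\<Sum>m\<in>{0..<L}. EE a m * Fh a m j) + dd a L * (\<Sum>m\<in>{0..<L}. ww a i m * Fh a m j)"
    unfolding XX_def sum_distrib_left sum.distrib[symmetric]
    by (rule sum.cong[OF refl]) (simp add: algebra_simps)
  also have "\<dots> = (-1)^(L-1) * EE a (L - 1 - i) * (if j = L - 1 then - EE a L else 0)
      + dd a L * ((if j = i then 1 else 0) - (if j = L - 1 then EE a (L - 1 - i) else 0))"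
    using rowE[OF j] roww[OF i j] by simp
  also have "\<dots> = (if i = j then dd a L else 0)"
  proof -
    have s: "(-1::real)^(L-1) * (- EE a L) = dd a L"
    proof -
      obtain L' where L': "L = Suc L'" using i by (cases L) auto
      show ?thesis unfolding EE_def L' by (simp add: mult.assoc[symmetric] neg1_sq)
    qed
    show ?thesis
      by (cases "j = L - 1"; cases "i = j") (auto simp: algebra_simps s[symmetric])
  qed
  finally show ?thesis .
qed

lemma adj_th:
  assumes D: "dd a L \<noteq> 0" and u: "u < L" and v: "v < L"
  shows "adj_mat (toeplitz_hess a L) $$ (u, v) = XX a L u v"
proof -
  let ?A = "toeplitz_hess a L"
  let ?X = "mat L L (\<lambda>(i,j). XX a L i j)"
  let ?D = "dd a L"
  have A: "?A \<in> carrier_mat L L" unfolding toeplitz_hess_def by simp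
  have X: "?X \<in> carrier_mat L L" by simp
  have adjC: "adj_mat ?A \<in> carrier_mat L L" using adj_mat(1)[OF A] .
  have XA': "?X * ?A = ?D \<cdot>\<^sub>m 1\<^sub>m L"
  proof (rule eq_matI)
    fix i j assume "i < dim_row (?D \<cdot>\<^sub>m 1\<^sub>m L)" "j < dim_col (?D \<cdot>\<^sub>m 1\<^sub>m L)"
    hence ij: "i < L" "j < L" by auto
    have "(?X * ?A) $$ (i,j) = (\<Sum>m\<in>{0..<L}. XX a L i m * Fh a m j)"
      using ij A unfolding toeplitz_hess_Fh by (simp add: scalar_prod_def)
    also have "\<dots> = (?D \<cdot>\<^sub>m 1\<^sub>m L) $$ (i,j)" using XA[OF ij] ij by simp
    finally show "(?X * ?A) $$ (i,j) = (?D \<cdot>\<^sub>m 1\<^sub>m L) $$ (i,j)" .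
  qed (use A in auto)
  have AadjA: "?A * adj_mat ?A = ?D \<cdot>\<^sub>m 1\<^sub>m L" using adj_mat(2)[OF A] unfolding dd_def .
  have "?X * ?A * adj_mat ?A = ?X * (?A * adj_mat ?A)" by (rule assoc_mult_mat[OF X A adjC])
  hence "(?D \<cdot>\<^sub>m 1\<^sub>m L) * adj_mat ?A = ?X * (?D \<cdot>\<^sub>m 1\<^sub>m L)" unfolding XA' AadjA .
  moreover have "(?D \<cdot>\<^sub>m 1\<^sub>m L) * adj_mat ?A = ?D \<cdot>\<^sub>m (1\<^sub>m L * adj_mat ?A)"
    by (rule mult_smult_assoc_mat) (use adjC in auto)
  moreover have "1\<^sub>m L * adj_mat ?A = adj_mat ?A" by (rule left_mult_one_mat[OF adjC])
  moreover have "?X * (?D \<cdot>\<^sub>m 1\<^sub>m L) = ?D \<cdot>\<^sub>m (?X * 1\<^sub>m L)"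
    by (rule mult_smult_distrib[OF X]) auto
  moreover have "?X * 1\<^sub>m L = ?X" by (rule right_mult_one_mat[OF X])
  ultimately have "?D \<cdot>\<^sub>m adj_mat ?A = ?D \<cdot>\<^sub>m ?X" by simp
  hence "(?D \<cdot>\<^sub>m adj_mat ?A) $$ (u,v) = (?D \<cdot>\<^sub>m ?X) $$ (u,v)" by simp
  hence "?D * adj_mat ?A $$ (u,v) = ?D * ?X $$ (u,v)" using adjC u v by simp
  thus ?thesis using D u v by simp
qed

lemma minor_formula:
  assumes D: "dd a L \<noteq> 0" and u: "u < L" and v: "v < L"
  shows "mL (Fh a) (del_list v L) (del_list u L) = (-1)^(u+v) * XX a L u v"
proof -
  have "adj_mat (toeplitz_hess a L) $$ (u, v) = cofactor (toeplitz_hess a L) v u"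
    unfolding adj_mat_def using u v by (simp add: toeplitz_hess_def)
  also have "\<dots> = (-1)^(u+v) * mL (Fh a) (del_list v L) (del_list u L)"
    unfolding cofactor_def using u v by (simp add: det_mat_delete_th add.commute)
  finally have "(-1)^(u+v) * XX a L u v = (-1)^(u+v) * ((-1)^(u+v) * mL (Fh a) (del_list v L) (del_list u L))"
    using adj_th[OF D u v] by simp
  thus ?thesis by (simp add: mult.assoc[symmetric] neg1_sq)
qed

lemma hard_formula:
  assumes D: "dd a L \<noteq> 0" and uv: "u < v" and v: "v < L"
  shows "mL (Fh a) (del_list v L) (del_list u L) = dd a v * dd a (L - 1 - u) - dd a L * dd a (v - Suc u)"
proof -
  define r where "r = L - 1 - u"
  have r: "L - 1 = u + r" using uv v unfolding r_def by simp
  define s where "s = v - Suc u"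
  have s: "v = Suc u + s" using uv unfolding s_def by simp
  have "mL (Fh a) (del_list v L) (del_list u L) = (-1)^(u+v) * XX a L u v"
    by (rule minor_formula) (use D uv v in auto)
  also have "\<dots> = dd a v * dd a (L - 1 - u) - dd a L * dd a (v - Suc u)"
    unfolding XX_def ww_def EE_def r s using uv
    by (simp add: algebra_simps minus_one_power_iff)
  finally show ?thesis .
qed

lemma easy_formula:
  assumes D: "dd a L \<noteq> 0" and uv: "v < u" and u: "u < L"
  shows "mL (Fh a) (del_list v L) (del_list u L) = dd a v * dd a (L - 1 - u)"
proof -
  define r where "r = L - 1 - u"
  have r: "L - 1 = u + r" using u unfolding r_def by simp
  have "mL (Fh a) (del_list v L) (del_list u L) = (-1)^(u+v) * XX a L u v"
    by (rule minor_formula) (use D uv u in auto)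
  also have "\<dots> = dd a v * dd a (L - 1 - u)"
    unfolding XX_def ww_def EE_def r using uv
    by (simp add: algebra_simps minus_one_power_iff)
  finally show ?thesis .
qed

abbreviation sl :: "nat set \<Rightarrow> nat list" where "sl \<equiv> sorted_list_of_set"

definition mS :: "(nat \<Rightarrow> nat \<Rightarrow> real) \<Rightarrow> nat set \<Rightarrow> nat set \<Rightarrow> real" where
  "mS f I J = mL f (sl I) (sl J)"

lemma sl_union:
  assumes "finite A" "finite B" "\<And>x y. x \<in> A \<Longrightarrow> y \<in> B \<Longrightarrow> x < y"
  shows "sl (A \<union> B) = sl A @ sl B"
proof -
  have 1: "sorted_wrt (<) (sl (A \<union> B))" by (rule strict_sorted_list_of_set)
  have 2: "sorted_wrt (<) (sl A @ sl B)"
    using assms by (auto simp: sorted_wrt_append)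
  have 3: "set (sl A @ sl B) = set (sl (A \<union> B))" using assms by auto
  show ?thesis using strict_sorted_equal[OF 1 2 3] by simp
qed

lemma mS_block:
  assumes fin: "finite I1" "finite I2" "finite J1" "finite J2"
    and oI: "\<And>x y. x \<in> I1 \<Longrightarrow> y \<in> I2 \<Longrightarrow> x < y"
    and oJ: "\<And>x y. x \<in> J1 \<Longrightarrow> y \<in> J2 \<Longrightarrow> x < y"
    and c1: "card I1 = card J1" and c2: "card I2 = card J2"
    and z: "\<And>x y. x \<in> I2 \<Longrightarrow> y \<in> J1 \<Longrightarrow> f x y = 0"
  shows "mS f (I1 \<union> I2) (J1 \<union> J2) = mS f I1 J1 * mS f I2 J2"
proof -
  have e1: "sl (I1 \<union> I2) = sl I1 @ sl I2" by (rule sl_union) (use fin oI in auto)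
  have e2: "sl (J1 \<union> J2) = sl J1 @ sl J2" by (rule sl_union) (use fin oJ in auto)
  show ?thesis unfolding mS_def e1 e2
    by (rule mL_block) (use fin c1 c2 z in auto)
qed

lemma mS_zero:
  assumes fin: "finite I1" "finite I2" "finite J1" "finite J2"
    and oI: "\<And>x y. x \<in> I1 \<Longrightarrow> y \<in> I2 \<Longrightarrow> x < y"
    and oJ: "\<And>x y. x \<in> J1 \<Longrightarrow> y \<in> J2 \<Longrightarrow> x < y"
    and c: "card I1 + card I2 = card J1 + card J2"
    and gt: "card I2 + card J1 > card I1 + card I2"
    and z: "\<And>x y. x \<in> I2 \<Longrightarrow> y \<in> J1 \<Longrightarrow> f x y = 0"
  shows "mS f (I1 \<union> I2) (J1 \<union> J2) = 0"
proof -
  have e1: "sl (I1 \<union> I2) = sl I1 @ sl I2" by (rule sl_union) (use fin oI in auto)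
  have e2: "sl (J1 \<union> J2) = sl J1 @ sl J2" by (rule sl_union) (use fin oJ in auto)
  show ?thesis unfolding mS_def e1 e2
    by (rule mL_zero) (use fin c gt z in auto)
qed

lemma contig_or_gap:
  assumes "finite S" "S \<noteq> {}"
  shows "S = {Min S..<Suc (Max S)} \<or> (\<exists>g. g \<notin> S \<and> Min S < g \<and> g < Max S)"
proof (cases "\<exists>g. g \<notin> S \<and> Min S < g \<and> g < Max S")
  case False
  have "S = {Min S..<Suc (Max S)}"
  proof
    show "S \<subseteq> {Min S..<Suc (Max S)}" using assms by (auto simp: less_Suc_eq_le)
    show "{Min S..<Suc (Max S)} \<subseteq> S"
    proof
      fix x assume x: "x \<in> {Min S..<Suc (Max S)}"
      show "x \<in> S"
      proof (cases "x = Min S \<or> x = Max S")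
        case True thus ?thesis using Min_in[OF assms] Max_in[OF assms] by auto
      next
        case False2: False
        hence "Min S < x" "x < Max S" using x by auto
        thus ?thesis using False by auto
      qed
    qed
  qed
  thus ?thesis by simp
qed simp

lemma sl_shift: "sl {m..<m + L} = map (\<lambda>x. x + m) [0..<L]"
  by (simp add: map_add_upt add.commute)

lemma set_del_list: "v < L \<Longrightarrow> set (del_list v L) = {0..<L} - {v}"
  unfolding del_list_def by auto

lemma sorted_del_list: "sorted_wrt (<) (del_list v L)"
  unfolding del_list_def by (auto simp: sorted_wrt_append)

lemma img_shift: "(\<lambda>x. x + (m::nat)) ` ({0..<L} - {v}) = {m..<m+L} - {m+v}"
proof
  show "(\<lambda>x. x + m) ` ({0..<L} - {v}) \<subseteq> {m..<m+L} - {m+v}" by auto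
  show "{m..<m+L} - {m+v} \<subseteq> (\<lambda>x. x + m) ` ({0..<L} - {v})"
  proof
    fix x assume x: "x \<in> {m..<m+L} - {m+v}"
    hence "x - m \<in> {0..<L} - {v}" and "x = (x - m) + m" by auto
    thus "x \<in> (\<lambda>x. x + m) ` ({0..<L} - {v})" by (metis image_eqI)
  qed
qed

lemma sl_shift_del:
  assumes v: "v < L"
  shows "sl ({m..<m + L} - {m + v}) = map (\<lambda>x. x + m) (del_list v L)"
proof -
  have 1: "sorted_wrt (<) (sl ({m..<m + L} - {m + v}))" by (rule strict_sorted_list_of_set)
  have 2: "sorted_wrt (<) (map (\<lambda>x. x + m) (del_list v L))"
    using sorted_del_list[of v L] by (simp add: sorted_wrt_map)
  have 3: "set (sl ({m..<m + L} - {m + v})) = set (map (\<lambda>x. x + m) (del_list v L))"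
    using v by (simp add: set_del_list img_shift)
  show ?thesis using strict_sorted_equal[OF 2 1 3] by simp
qed

lemma split_gap:
  fixes S :: "nat set"
  assumes fin: "finite S" and g: "g \<notin> S"
  shows "S = {x\<in>S. x < g} \<union> {x\<in>S. g < x}"
    "finite {x\<in>S. x < g}" "finite {x\<in>S. g < x}"
proof -
  show "S = {x\<in>S. x < g} \<union> {x\<in>S. g < x}"
  proof
    show "S \<subseteq> {x\<in>S. x < g} \<union> {x\<in>S. g < x}"
    proof
      fix x assume "x \<in> S"
      hence "x \<noteq> g" using g by auto
      thus "x \<in> {x\<in>S. x < g} \<union> {x\<in>S. g < x}" using \<open>x \<in> S\<close> by (cases "x < g") auto
    qed
  qed auto
qed (use fin in auto)

lemma P_pos:
  assumes dpos: "\<And>m. dd a m > 0"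
  shows "finite S \<Longrightarrow> mS (Fh a) S S > 0"
proof (induction "card S" arbitrary: S rule: less_induct)
  case less
  show ?case
  proof (cases "S = {}")
    case True thus ?thesis by (simp add: mS_def mL_Nil)
  next
    case False
    from contig_or_gap[OF less.prems False] show ?thesis
    proof
      assume c: "S = {Min S..<Suc (Max S)}"
      define m where "m = Min S"
      define L where "L = Suc (Max S) - Min S"
      have "Min S \<le> Max S" using Min_in[OF less.prems False] Max_ge[OF less.prems] by blast
      hence "S = {m..<m+L}" using c unfolding m_def L_def by simp
      hence "sl S = map (\<lambda>x. x+m) [0..<L]" by (simp only: sl_shift)
      hence "mS (Fh a) S S = dd a L" unfolding mS_def dd_mL by (simp add: mL_Fh_shift)
      thus ?thesis using dpos by simp
    next
      assume "\<exists>g. g \<notin> S \<and> Min S < g \<and> g < Max S"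
      then obtain g where g: "g \<notin> S" "Min S < g" "g < Max S" by blast
      define S1 where "S1 = {x\<in>S. x<g}"
      define S2 where "S2 = {x\<in>S. g<x}"
      have S: "S = S1 \<union> S2" and f1: "finite S1" and f2: "finite S2"
        using split_gap[OF less.prems g(1)] unfolding S1_def S2_def by auto
      have "Max S \<notin> S1" "Max S \<in> S" using g Max_in[OF less.prems False] unfolding S1_def by auto
      hence c1: "card S1 < card S" using less.prems unfolding S1_def by (intro psubset_card_mono) auto
      have "Min S \<notin> S2" "Min S \<in> S" using g Min_in[OF less.prems False] unfolding S2_def by auto
      hence c2: "card S2 < card S" using less.prems unfolding S2_def by (intro psubset_card_mono) auto
      have "mS (Fh a) S S = mS (Fh a) S1 S1 * mS (Fh a) S2 S2"
        unfolding S by (rule mS_block) (use less.prems in \<open>auto simp: S1_def S2_def intro!: Fh_zero\<close>)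
      moreover have "mS (Fh a) S1 S1 > 0" using less.hyps[OF c1 f1] .
      moreover have "mS (Fh a) S2 S2 > 0" using less.hyps[OF c2 f2] .
      ultimately show ?thesis by simp
    qed
  qed
qed

lemma W_nonneg:
  assumes dpos: "\<And>m. dd a m > 0"
    and hpos: "\<And>L u v. u < v \<Longrightarrow> v < L \<Longrightarrow> dd a v * dd a (L - 1 - u) - dd a L * dd a (v - Suc u) \<ge> 0"
  shows "finite S \<Longrightarrow> p < q \<Longrightarrow> p \<in> S \<Longrightarrow> q \<in> S \<Longrightarrow> {p..q} \<subseteq> S \<Longrightarrow>
     mS (Fh a) (S - {q}) (S - {p}) \<ge> 0 \<and> mS (Fh a) (S - {p}) (S - {q}) \<ge> 0"
proof (induction "card S" arbitrary: S rule: less_induct)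
  case less
  have fin: "finite S" using less.prems by simp
  have ne: "S \<noteq> {}" using less.prems by auto
  from contig_or_gap[OF fin ne] show ?case
  proof
    assume c: "S = {Min S..<Suc (Max S)}"
    define m where "m = Min S"
    define L where "L = Suc (Max S) - Min S"
    have "Min S \<le> Max S" using Min_in[OF fin ne] Max_ge[OF fin] by blast
    hence SL: "S = {m..<m+L}" using c unfolding m_def L_def by simp
    define u where "u = p - m"
    define v where "v = q - m"
    have pu: "p = m + u" and qv: "q = m + v" and uv: "u < v" and vL: "v < L"
      using less.prems SL unfolding u_def v_def by auto
    have e1: "sl (S - {q}) = map (\<lambda>x. x + m) (del_list v L)"
      unfolding SL qv by (rule sl_shift_del[OF vL])
    have e2: "sl (S - {p}) = map (\<lambda>x. x + m) (del_list u L)"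
      unfolding SL pu by (rule sl_shift_del) (use uv vL in simp)
    have len: "length (del_list u L) = length (del_list v L)"
      using uv vL by (simp add: length_del_list)
    have DL: "dd a L \<noteq> 0" using dpos[of L] by simp
    have "mS (Fh a) (S - {q}) (S - {p}) = mL (Fh a) (del_list v L) (del_list u L)"
      unfolding mS_def e1 e2 by (rule mL_Fh_shift) (use len in simp)
    also have "\<dots> = dd a v * dd a (L - 1 - u) - dd a L * dd a (v - Suc u)"
      by (rule hard_formula[OF DL uv vL])
    finally have h1: "mS (Fh a) (S - {q}) (S - {p}) \<ge> 0" using hpos[OF uv vL] by simp
    have "mS (Fh a) (S - {p}) (S - {q}) = mL (Fh a) (del_list u L) (del_list v L)"
      unfolding mS_def e1 e2 by (rule mL_Fh_shift) (use len in simp)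
    also have "\<dots> = dd a u * dd a (L - 1 - v)"
      by (rule easy_formula[OF DL uv vL])
    finally have h2: "mS (Fh a) (S - {p}) (S - {q}) \<ge> 0"
      using dpos[of u] dpos[of "L - 1 - v"] by simp
    show ?thesis using h1 h2 by simp
  next
    assume "\<exists>g. g \<notin> S \<and> Min S < g \<and> g < Max S"
    then obtain g where g: "g \<notin> S" "Min S < g" "g < Max S" by blast
    define S1 where "S1 = {x\<in>S. x<g}"
    define S2 where "S2 = {x\<in>S. g<x}"
    have S: "S = S1 \<union> S2" and f1: "finite S1" and f2: "finite S2"
      using split_gap[OF fin g(1)] unfolding S1_def S2_def by auto
    have "Max S \<notin> S1" "Max S \<in> S" using g Max_in[OF fin ne] unfolding S1_def by auto
    hence c1: "card S1 < card S" using fin unfolding S1_def by (intro psubset_card_mono) auto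
    have "Min S \<notin> S2" "Min S \<in> S" using g Min_in[OF fin ne] unfolding S2_def by auto
    hence c2: "card S2 < card S" using fin unfolding S2_def by (intro psubset_card_mono) auto
    have P1: "mS (Fh a) S1 S1 > 0" using P_pos[OF dpos f1] .
    have P2: "mS (Fh a) S2 S2 > 0" using P_pos[OF dpos f2] .
    have "g < p \<or> q < g"
    proof (rule ccontr)
      assume "\<not> (g < p \<or> q < g)"
      hence "g \<in> {p..q}" by auto
      thus False using less.prems g(1) by auto
    qed
    thus ?thesis
    proof
      assume gp: "g < p"
      have pq2: "p \<in> S2" "q \<in> S2" "{p..q} \<subseteq> S2" using less.prems gp unfolding S2_def by auto
      have IH: "mS (Fh a) (S2 - {q}) (S2 - {p}) \<ge> 0 \<and> mS (Fh a) (S2 - {p}) (S2 - {q}) \<ge> 0"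
        using less.hyps[OF c2 f2 less.prems(2) pq2] .
      have cc: "card (S2 - {q}) = card (S2 - {p})" using pq2 f2 by simp
      have r1: "S - {q} = S1 \<union> (S2 - {q})" "S - {p} = S1 \<union> (S2 - {p})"
      proof -
        have "q \<notin> S1" "p \<notin> S1" using gp less.prems(2) unfolding S1_def by auto
        thus "S - {q} = S1 \<union> (S2 - {q})" "S - {p} = S1 \<union> (S2 - {p})" using S by auto
      qed
      have "mS (Fh a) (S - {q}) (S - {p}) = mS (Fh a) S1 S1 * mS (Fh a) (S2 - {q}) (S2 - {p})"
        unfolding r1 by (rule mS_block) (use cc fin in \<open>auto simp: S1_def S2_def intro!: Fh_zero\<close>)
      moreover have "mS (Fh a) (S - {p}) (S - {q}) = mS (Fh a) S1 S1 * mS (Fh a) (S2 - {p}) (S2 - {q})"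
        unfolding r1 by (rule mS_block) (use cc fin in \<open>auto simp: S1_def S2_def intro!: Fh_zero\<close>)
      ultimately show ?thesis using IH P1 by simp
    next
      assume gq: "q < g"
      have pq1: "p \<in> S1" "q \<in> S1" "{p..q} \<subseteq> S1" using less.prems gq unfolding S1_def by auto
      have IH: "mS (Fh a) (S1 - {q}) (S1 - {p}) \<ge> 0 \<and> mS (Fh a) (S1 - {p}) (S1 - {q}) \<ge> 0"
        using less.hyps[OF c1 f1 less.prems(2) pq1] .
      have cc: "card (S1 - {q}) = card (S1 - {p})" using pq1 f1 by simp
      have r1: "S - {q} = (S1 - {q}) \<union> S2" "S - {p} = (S1 - {p}) \<union> S2"
      proof -
        have "q \<notin> S2" "p \<notin> S2" using gq less.prems(2) unfolding S2_def by auto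
        thus "S - {q} = (S1 - {q}) \<union> S2" "S - {p} = (S1 - {p}) \<union> S2" using S by auto
      qed
      have "mS (Fh a) (S - {q}) (S - {p}) = mS (Fh a) (S1 - {q}) (S1 - {p}) * mS (Fh a) S2 S2"
        unfolding r1 by (rule mS_block) (use cc fin in \<open>auto simp: S1_def S2_def intro!: Fh_zero\<close>)
      moreover have "mS (Fh a) (S - {p}) (S - {q}) = mS (Fh a) (S1 - {p}) (S1 - {q}) * mS (Fh a) S2 S2"
        unfolding r1 by (rule mS_block) (use cc fin in \<open>auto simp: S1_def S2_def intro!: Fh_zero\<close>)
      ultimately show ?thesis using IH P2 by simp
    qed
  qed
qed

lemma gap_zero:
  assumes fin: "finite S" and pS: "p \<in> S" and qS: "q \<in> S" and pg: "p < g" and gq: "g < q" and g: "g \<notin> S"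
  shows "mS (Fh a) (S - {p}) (S - {q}) = 0"
proof -
  define S1 where "S1 = {x\<in>S. x<g}"
  define S2 where "S2 = {x\<in>S. g<x}"
  have S: "S = S1 \<union> S2" and f1: "finite S1" and f2: "finite S2"
    using split_gap[OF fin g] unfolding S1_def S2_def by auto
  have p1: "p \<in> S1" and q2: "q \<in> S2" using pS qS pg gq unfolding S1_def S2_def by auto
  have r: "S - {p} = (S1 - {p}) \<union> S2" "S - {q} = S1 \<union> (S2 - {q})"
  proof -
    have "q \<notin> S1" "p \<notin> S2" using pg gq unfolding S1_def S2_def by auto
    thus "S - {p} = (S1 - {p}) \<union> S2" "S - {q} = S1 \<union> (S2 - {q})" using S by auto
  qed
  have k1: "card S1 \<ge> 1" using p1 f1 by (metis One_nat_def Suc_leI card_gt_0_iff empty_iff)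
  have k2: "card S2 \<ge> 1" using q2 f2 by (metis One_nat_def Suc_leI card_gt_0_iff empty_iff)
  have cp: "card (S1 - {p}) = card S1 - 1" using p1 f1 by simp
  have cq: "card (S2 - {q}) = card S2 - 1" using q2 f2 by simp
  show ?thesis unfolding r
    by (rule mS_zero) (use fin cp cq k1 k2 in \<open>auto simp: S1_def S2_def intro!: Fh_zero\<close>)
qed

lemma prod_nonneg:
  assumes dpos: "\<And>m. dd a m > 0"
    and hpos: "\<And>L u v. u < v \<Longrightarrow> v < L \<Longrightarrow> dd a v * dd a (L - 1 - u) - dd a L * dd a (v - Suc u) \<ge> 0"
    and fin: "finite S" and pS: "p \<in> S" and qS: "q \<in> S" and pq: "p < q"
  shows "mS (Fh a) (S - {q}) (S - {p}) * mS (Fh a) (S - {p}) (S - {q}) \<ge> 0"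
proof (cases "{p..q} \<subseteq> S")
  case True
  from W_nonneg[OF dpos hpos fin pq pS qS True] show ?thesis by simp
next
  case False
  then obtain g where g: "g \<in> {p..q}" "g \<notin> S" by blast
  hence "p < g" "g < q" using pS qS by (auto simp: order.order_iff_strict)
  hence "mS (Fh a) (S - {p}) (S - {q}) = 0" by (intro gap_zero[OF fin pS qS _ _ g(2)])
  thus ?thesis by simp
qed

lemma set_take_less:
  fixes xs :: "nat list"
  assumes s: "sorted_wrt (<) xs" and i: "i < length xs"
  shows "{a \<in> set xs. a < xs ! i} = set (take i xs)"
proof
  show "{a \<in> set xs. a < xs ! i} \<subseteq> set (take i xs)"
  proof
    fix a assume "a \<in> {a \<in> set xs. a < xs ! i}"
    then obtain j where j: "j < length xs" "a = xs ! j" and lt: "xs ! j < xs ! i"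
      by (auto simp: in_set_conv_nth)
    have "j < i"
    proof (rule ccontr)
      assume "\<not> j < i"
      hence "i = j \<or> i < j" by auto
      thus False
      proof
        assume "i = j" thus False using lt by simp
      next
        assume "i < j" hence "xs ! i < xs ! j" using sorted_wrt_nth_less[OF s _ j(1)] by simp
        thus False using lt by simp
      qed
    qed
    thus "a \<in> set (take i xs)" using j by (auto simp: in_set_conv_nth intro!: exI[of _ j])
  qed
  show "set (take i xs) \<subseteq> {a \<in> set xs. a < xs ! i}"
  proof
    fix a assume "a \<in> set (take i xs)"
    then obtain j where j: "j < i" "a = xs ! j" using i by (auto simp: in_set_conv_nth)
    hence "a < xs ! i" using sorted_wrt_nth_less[OF s j(1) i] by simp
    moreover have "a \<in> set xs" using j i by simp
    ultimately show "a \<in> {a \<in> set xs. a < xs ! i}" by simp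
  qed
qed

lemma pick_sl:
  assumes fin: "finite S" and i: "i < card S"
  shows "pick S i = sl S ! i"
proof -
  let ?xs = "sl S"
  have s: "sorted_wrt (<) ?xs" by (rule strict_sorted_list_of_set)
  have il: "i < length ?xs" using fin i by simp
  have xS: "?xs ! i \<in> S" using nth_mem[OF il] fin by simp
  have "{a \<in> S. a < ?xs ! i} = set (take i ?xs)"
    using set_take_less[OF s il] fin by simp
  hence "card {a \<in> S. a < ?xs ! i} = i"
    using il by (simp add: distinct_card)
  thus ?thesis using pick_card_in_set[OF xS] by simp
qed

lemma minor_mS:
  assumes a: "\<alpha> \<subseteq> {..<n}" and b: "\<beta> \<subseteq> {..<n}" and c: "card \<alpha> = card \<beta>"
  shows "minor (toeplitz_hess a n) \<alpha> \<beta> = mS (Fh a) \<alpha> \<beta>"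
proof -
  have fa: "finite \<alpha>" and fb: "finite \<beta>" using a b finite_subset by auto
  have ea: "{i. i < n \<and> i \<in> \<alpha>} = \<alpha>" and eb: "{i. i < n \<and> i \<in> \<beta>} = \<beta>" using a b by auto
  show ?thesis
    unfolding minor_def submatrix_def mS_def mL_def
  proof (intro arg_cong[where f=det] eq_matI)
    fix i j assume "i < dim_row (mat (length (sl \<alpha>)) (length (sl \<alpha>)) (\<lambda>(i, j). Fh a (sl \<alpha> ! i) (sl \<beta> ! j)))"
      "j < dim_col (mat (length (sl \<alpha>)) (length (sl \<alpha>)) (\<lambda>(i, j). Fh a (sl \<alpha> ! i) (sl \<beta> ! j)))"
    hence i: "i < card \<alpha>" and j: "j < card \<beta>" using fa c by auto
    have pi: "pick \<alpha> i = sl \<alpha> ! i" by (rule pick_sl[OF fa i])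
    have pj: "pick \<beta> j = sl \<beta> ! j" by (rule pick_sl[OF fb j])
    have "pick \<alpha> i \<in> \<alpha>" "pick \<beta> j \<in> \<beta>" using pick_in_set_le i j by auto
    hence lt: "pick \<alpha> i < n" "pick \<beta> j < n" using a b by auto
    show "mat (card {i. i < dim_row (toeplitz_hess a n) \<and> i \<in> \<alpha>}) (card {j. j < dim_col (toeplitz_hess a n) \<and> j \<in> \<beta>})
          (\<lambda>(i, j). toeplitz_hess a n $$ (pick \<alpha> i, pick \<beta> j)) $$ (i, j) =
        mat (length (sl \<alpha>)) (length (sl \<alpha>)) (\<lambda>(i, j). Fh a (sl \<alpha> ! i) (sl \<beta> ! j)) $$ (i, j)"
      using i j c lt fa unfolding toeplitz_hess_Fh by (simp add: ea eb pi pj)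
  qed (use fa fb c ea eb in \<open>auto simp: toeplitz_hess_def\<close>)
qed

lemma dd_pos: "0 < t \<Longrightarrow> dd (seq_kt k t) m > 0"
  by (simp add: dd_seq)

lemma hpos_t:
  assumes t0: "0 < t" and t1: "t < 1" and uv: "u < v" and vL: "v < L"
  shows "dd (seq_kt k t) v * dd (seq_kt k t) (L - 1 - u) - dd (seq_kt k t) L * dd (seq_kt k t) (v - Suc u) \<ge> 0"
proof -
  have e: "(v - k - 1) + (L - 1 - u - k - 1) \<le> (L - k - 1) + (v - Suc u - k - 1)"
    using uv vL by arith
  have "t ^ ((L - k - 1) + (v - Suc u - k - 1)) \<le> t ^ ((v - k - 1) + (L - 1 - u - k - 1))"
    by (rule power_decreasing[OF e]) (use t0 t1 in auto)
  thus ?thesis unfolding dd_seq by (simp add: power_add)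
qed

theorem proposition2:
  fixes n k :: nat and t :: real
  assumes "0 < t" and "t < 1"
  shows "GKK_matrix (A_nkt n k t)"
proof -
  let ?a = "seq_kt k t"
  let ?A = "toeplitz_hess ?a n"
  have dpos: "\<And>m. dd ?a m > 0" using assms(1) by (rule dd_pos)
  have hpos: "\<And>L u v. u < v \<Longrightarrow> v < L \<Longrightarrow> dd ?a v * dd ?a (L - 1 - u) - dd ?a L * dd ?a (v - Suc u) \<ge> 0"
    using hpos_t assms by blast
  have dimA: "dim_row ?A = n" "?A \<in> carrier_mat n n" unfolding toeplitz_hess_def by auto
  have P: "P_matrix ?A"
    unfolding P_matrix_def dimA(1)
  proof (intro conjI allI impI)
    show "?A \<in> carrier_mat n n" by (rule dimA(2))
    fix \<alpha> assume a: "\<alpha> \<subseteq> {..<n}"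
    hence fa: "finite \<alpha>" using finite_subset by auto
    show "minor ?A \<alpha> \<alpha> > 0" unfolding minor_mS[OF a a refl] by (rule P_pos[OF dpos fa])
  qed
  have W: "weakly_sign_symmetric ?A"
    unfolding weakly_sign_symmetric_def dimA(1)
  proof (intro conjI allI impI)
    show "?A \<in> carrier_mat n n" by (rule dimA(2))
    fix \<alpha> \<beta> assume a: "\<alpha> \<subseteq> {..<n}" and b: "\<beta> \<subseteq> {..<n}" and c: "card \<alpha> = card \<beta>"
      and u: "card (\<alpha> \<union> \<beta>) = card \<alpha> + 1"
    have fa: "finite \<alpha>" and fb: "finite \<beta>" using a b finite_subset by auto
    define S where "S = \<alpha> \<union> \<beta>"
    have fS: "finite S" unfolding S_def using fa fb by simp
    have "card (\<alpha> \<union> \<beta>) = card \<alpha> + card (\<beta> - \<alpha>)"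
      using fa fb by (metis Un_Diff_cancel card_Un_disjoint Diff_disjoint finite_Diff)
    hence "card (\<beta> - \<alpha>) = 1" using u by simp
    then obtain q where q: "\<beta> - \<alpha> = {q}" by (rule card_1_singletonE)
    have "card (\<alpha> \<union> \<beta>) = card \<beta> + card (\<alpha> - \<beta>)"
      using fa fb by (metis Un_Diff_cancel Un_commute card_Un_disjoint Diff_disjoint finite_Diff)
    hence "card (\<alpha> - \<beta>) = 1" using u c by simp
    then obtain p where p: "\<alpha> - \<beta> = {p}" by (rule card_1_singletonE)
    have pS: "p \<in> S" and qS: "q \<in> S" using p q unfolding S_def by auto
    have pq: "p \<noteq> q" using p q by auto
    have ea: "\<alpha> = S - {q}" using p q unfolding S_def by blast
    have eb: "\<beta> = S - {p}" using p q unfolding S_def by blast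
    have "minor ?A \<alpha> \<beta> * minor ?A \<beta> \<alpha> = mS (Fh ?a) (S - {q}) (S - {p}) * mS (Fh ?a) (S - {p}) (S - {q})"
    proof -
      have "minor ?A \<alpha> \<beta> * minor ?A \<beta> \<alpha> = mS (Fh ?a) \<alpha> \<beta> * mS (Fh ?a) \<beta> \<alpha>"
        using minor_mS[OF a b c] minor_mS[OF b a c[symmetric]] by simp
      also have "\<dots> = mS (Fh ?a) (S - {q}) (S - {p}) * mS (Fh ?a) (S - {p}) (S - {q})"
        by (simp only: ea[symmetric] eb[symmetric])
      finally show ?thesis .
    qed
    also have "\<dots> \<ge> 0"
    proof (cases "p < q")
      case True
      have "mS (Fh ?a) (S - {q}) (S - {p}) * mS (Fh ?a) (S - {p}) (S - {q}) \<ge> 0"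
        by (rule prod_nonneg[where a="?a"]) (use dpos hpos fS pS qS True in auto)
      thus ?thesis by simp
    next
      case False hence "q < p" using pq by simp
      from prod_nonneg[OF dpos hpos fS qS pS this] show ?thesis by (simp add: mult.commute)
    qed
    finally show "minor ?A \<alpha> \<beta> * minor ?A \<beta> \<alpha> \<ge> 0" .
  qed
  show ?thesis unfolding GKK_matrix_def A_nkt_def using P W by simp
qed

end
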